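(* For all integers $k\ge 1$ and $j\ge 1$, setting $m=\binom{kj-1}{(k-1)j}$, the complete $k$-partite graph $K_{m*k}$ is not $(k-1)j$-choosable; that is, $\mathrm{ch}(K_{m*k})\ge (k-1)j+1$.
   Context: A list assignment $L$ for a graph $G$ assigns to each vertex $v$ a set $L(v)$ of colors. An $L$-coloring is a proper coloring $f$ of $G$ with $f(v)\in L(v)$ for all $v$. $G$ is $r$-choosable if it has an $L$-coloring for every list assignment $L$ with $|L(v)|\ge r$ for all $v$; the choice number $\mathrm{ch}(G)$ is the least such $r$. $K_{m*k}$ denotes the complete multipartite graph with $k$ parts of size $m$. *)

theory Defs
  imports Main
begin

text \<open>A graph is given by a vertex set V and a symmetric adjacency relation E.
  Colours are natural numbers (lists are finite, so any colour set can be relabelled).\<close>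

definition L_colouring :: "'v set \<Rightarrow> ('v \<Rightarrow> 'v \<Rightarrow> bool) \<Rightarrow> ('v \<Rightarrow> nat set) \<Rightarrow> ('v \<Rightarrow> nat) \<Rightarrow> bool" where
  "L_colouring V E L f \<longleftrightarrow>
     (\<forall>v\<in>V. f v \<in> L v) \<and> (\<forall>u\<in>V. \<forall>v\<in>V. E u v \<longrightarrow> f u \<noteq> f v)"

definition choosable :: "'v set \<Rightarrow> ('v \<Rightarrow> 'v \<Rightarrow> bool) \<Rightarrow> nat \<Rightarrow> bool" where
  "choosable V E r \<longleftrightarrow>
     (\<forall>L. (\<forall>v\<in>V. finite (L v) \<and> card (L v) \<ge> r) \<longrightarrow> (\<exists>f. L_colouring V E L f))"

definition cmp_vertices :: "nat \<Rightarrow> nat \<Rightarrow> (nat \<times> nat) set" where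
  "cmp_vertices m k = {0..<k} \<times> {0..<m}"

definition cmp_adj :: "nat \<times> nat \<Rightarrow> nat \<times> nat \<Rightarrow> bool" where
  "cmp_adj u v \<longleftrightarrow> fst u \<noteq> fst v"

end

theory Submission
  imports Defs
begin

theorem mainTheorem3:
  fixes k j :: nat
  assumes "k \<ge> 1" and "j \<ge> 1"
  shows "\<not> choosable (cmp_vertices ((k * j - 1) choose ((k - 1) * j)) k) cmp_adj ((k - 1) * j)"
proof
  define N where "N = k * j - 1"
  define r where "r = (k - 1) * j"
  define m where "m = N choose r"
  define S where "S = {0..<N}"
  define F where "F = {A. A \<subseteq> S \<and> card A = r}"
  have kj: "k * j = r + j"
  proof -
    obtain k' where "k = Suc k'" using assms(1) by (cases k) auto
    thus ?thesis unfolding r_def by simp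
  qed
  have NS: "card S = N" "finite S" unfolding S_def by auto
  have Nr: "N = r + (j - 1)" unfolding N_def using kj assms by simp
  have cardF: "card F = m" unfolding F_def m_def using n_subsets[OF NS(2), of r] NS by simp
  have finF: "finite F" unfolding F_def using NS(2) by auto
  obtain g where g: "bij_betw g {0..<m} F"
    using ex_bij_betw_nat_finite[OF finF] cardF by auto
  assume "choosable (cmp_vertices ((k * j - 1) choose ((k - 1) * j)) k) cmp_adj ((k - 1) * j)"
  hence ch: "choosable (cmp_vertices m k) cmp_adj r" unfolding m_def N_def r_def .
  define L where "L = (\<lambda>v::nat\<times>nat. g (snd v))"
  have "\<forall>v\<in>cmp_vertices m k. finite (L v) \<and> card (L v) \<ge> r"
  proof
    fix v assume "v \<in> cmp_vertices m k"
    hence "snd v \<in> {0..<m}" unfolding cmp_vertices_def by auto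
    hence "L v \<in> F" unfolding L_def using g by (auto simp: bij_betw_def)
    thus "finite (L v) \<and> card (L v) \<ge> r" unfolding F_def using NS(2) finite_subset by auto
  qed
  with ch obtain f where f: "L_colouring (cmp_vertices m k) cmp_adj L f"
    unfolding choosable_def by blast
  define C where "C = (\<lambda>i. f ` ({i} \<times> {0..<m}))"
  have CS: "C i \<subseteq> S" if "i < k" for i
  proof
    fix c assume "c \<in> C i"
    then obtain x where x: "x < m" "c = f (i, x)" unfolding C_def by auto
    have "(i,x) \<in> cmp_vertices m k" using x that unfolding cmp_vertices_def by auto
    hence "c \<in> L (i,x)" using f x unfolding L_colouring_def by auto
    moreover have "L (i,x) \<in> F" unfolding L_def using g x by (auto simp: bij_betw_def)
    ultimately show "c \<in> S" unfolding F_def by auto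
  qed
  have disj: "C i \<inter> C i' = {}" if "i < k" "i' < k" "i \<noteq> i'" for i i'
  proof (rule ccontr)
    assume "C i \<inter> C i' \<noteq> {}"
    then obtain x x' where "x < m" "x' < m" "f (i,x) = f (i',x')" unfolding C_def by auto
    moreover have "(i,x) \<in> cmp_vertices m k" "(i',x') \<in> cmp_vertices m k"
      using calculation that unfolding cmp_vertices_def by auto
    ultimately show False using f that unfolding L_colouring_def cmp_adj_def
      by (metis fst_conv)
  qed
  have big: "card (C i) \<ge> j" if "i < k" for i
  proof (rule ccontr)
    assume "\<not> j \<le> card (C i)"
    have fin: "finite (C i)" using CS[OF that] NS(2) finite_subset by auto
    have "card (S - C i) = N - card (C i)" using card_Diff_subset[OF fin CS[OF that]] NS by simp
    hence "card (S - C i) \<ge> r" using Nr \<open>\<not> j \<le> card (C i)\<close> by simp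
    then obtain A where A: "A \<subseteq> S - C i" "card A = r"
      using obtain_subset_with_card_n by metis
    hence "A \<in> F" unfolding F_def by auto
    hence "A \<in> g ` {0..<m}" using g by (simp add: bij_betw_def)
    then obtain x where x: "x < m" "g x = A" by auto
    have "(i,x) \<in> cmp_vertices m k" using x that unfolding cmp_vertices_def by auto
    hence "f (i,x) \<in> A" using f x unfolding L_colouring_def L_def by auto
    moreover have "f (i,x) \<in> C i" unfolding C_def using x by auto
    ultimately show False using A by auto
  qed
  have finC: "\<forall>i\<in>{0..<k}. finite (C i)" using CS NS(2) by (meson atLeastLessThan_iff finite_subset)
  have "card (\<Union>i\<in>{0..<k}. C i) = (\<Sum>i\<in>{0..<k}. card (C i))"
    by (rule card_UN_disjoint) (use finC disj in auto)
  also have "\<dots> \<ge> (\<Sum>i\<in>{0..<k}. j)" by (rule sum_mono) (use big in auto)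
  finally have "card (\<Union>i\<in>{0..<k}. C i) \<ge> k * j" by simp
  moreover have "card (\<Union>i\<in>{0..<k}. C i) \<le> card S"
    by (rule card_mono) (use NS CS in \<open>auto simp: subset_iff\<close>)
  ultimately show False using NS Nr kj assms by simp
qed

end
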